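(* Let $R$ be a commutative ring and let $C^i_{jk}\in R$ ($1\le i,j,k\le n$) satisfy $C^i_{jk}=-C^i_{kj}$ and $\sum_\alpha\bigl(C^\alpha_{ij}C^l_{\alpha k}+C^\alpha_{jk}C^l_{\alpha i}+C^\alpha_{ki}C^l_{\alpha j}\bigr)=0$ for all $i,j,k,l$. In the polynomial ring $R[\partial^1,\dots,\partial^n]$ let $\mathbf C^i_j:=\sum_k C^i_{jk}\partial^k$ and let $\delta_\rho$ denote the partial derivative with respect to $\partial^\rho$. Then for every $L\ge0$ and all $1\le\mu,\nu,\gamma\le n$: $$\sum_{\rho,\sigma}\Bigl(\mathbf C^\rho_\nu C^\sigma_{\mu\rho}(\mathbf C^L)^\gamma_\sigma-\mathbf C^\rho_\mu C^\sigma_{\nu\rho}(\mathbf C^L)^\gamma_\sigma\Bigr)=\sum_\sigma C^\sigma_{\mu\nu}(\mathbf C^{L+1})^\gamma_\sigma,$$ $$\sum_\rho\Bigl(C^\gamma_{\mu\rho}(\mathbf C^L)^\rho_\nu+\mathbf C^\rho_\nu\,\delta_\rho\bigl((\mathbf C^L)^\gamma_\mu\bigr)-C^\gamma_{\nu\rho}(\mathbf C^L)^\rho_\mu-\mathbf C^\rho_\mu\,\delta_\rho\bigl((\mathbf C^L)^\gamma_\nu\bigr)\Bigr)=2\sum_\sigma C^\sigma_{\mu\nu}(\mathbf C^L)^\gamma_\sigma.$$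
   Context: $\mathbf C^L$ is the $L$-th matrix power of the matrix $(\mathbf C^i_j)$ with entries in $R[\partial^1,\dots,\partial^n]$, $\mathbf C^0$ the identity matrix. *)

theory Defs
  imports Main "HOL-Library.Poly_Mapping"
begin

text \<open>Polynomials in the commuting variables \<open>\<partial>^1, \<partial>^2, \<dots>\<close> over a commutative ring:
  finitely supported maps from monomials (finitely supported exponent vectors
  \<open>nat \<Rightarrow>\<^sub>0 nat\<close>) to coefficients, with convolution product.\<close>

type_synonym 'a dpoly = "(nat \<Rightarrow>\<^sub>0 nat) \<Rightarrow>\<^sub>0 'a"

definition dvar :: "nat \<Rightarrow> 'a::comm_ring_1 dpoly" where
  "dvar k = Poly_Mapping.single (Poly_Mapping.single k 1) 1"

definition pdiff :: "nat \<Rightarrow> 'a::comm_ring_1 dpoly \<Rightarrow> 'a dpoly" where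
  "pdiff \<rho> p = (\<Sum>m\<in>Poly_Mapping.keys p. Poly_Mapping.single (m - Poly_Mapping.single \<rho> (1::nat))
                               (of_nat (Poly_Mapping.lookup (m::nat \<Rightarrow>\<^sub>0 nat) \<rho>) * Poly_Mapping.lookup p m))"

text \<open>The matrix \<open>\<^bold>C^i_j = \<Sum>_k C^i_{jk} \<partial>^k\<close> (row index \<open>i\<close>, column index \<open>j\<close>),
  with \<open>C i j k\<close> standing for \<open>C^i_{jk}\<close>.\<close>
definition Cmat :: "nat \<Rightarrow> (nat \<Rightarrow> nat \<Rightarrow> nat \<Rightarrow> 'a::comm_ring_1) \<Rightarrow> nat \<Rightarrow> nat \<Rightarrow> 'a dpoly" where
  "Cmat n C i j = (\<Sum>k\<in>{1..n}. Poly_Mapping.single 0 (C i j k) * dvar k)"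

fun Cpow :: "nat \<Rightarrow> (nat \<Rightarrow> nat \<Rightarrow> nat \<Rightarrow> 'a::comm_ring_1) \<Rightarrow> nat \<Rightarrow> nat \<Rightarrow> nat \<Rightarrow> 'a dpoly" where
  "Cpow n C 0 i j = (if i = j then 1 else 0)"
| "Cpow n C (Suc L) i j = (\<Sum>k\<in>{1..n}. Cpow n C L i k * Cmat n C k j)"

end

theory Submission
  imports Defs
begin


lemma sub_single_eq:
  fixes a m :: "nat \<Rightarrow>\<^sub>0 nat"
  assumes "Poly_Mapping.lookup a r \<ge> 1"
  shows "(a - Poly_Mapping.single r 1 = m) \<longleftrightarrow> (a = m + Poly_Mapping.single r 1)"
  using assms
  by (auto simp: poly_mapping_eq_iff fun_eq_iff lookup_minus lookup_add lookup_single when_def)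

lemma pdiff_lookup:
  "Poly_Mapping.lookup (pdiff r p) m = of_nat (Poly_Mapping.lookup m r + 1) * Poly_Mapping.lookup p (m + Poly_Mapping.single r 1)"
proof -
  let ?s = "Poly_Mapping.single r (1::nat)"
  let ?c = "\<lambda>m'. of_nat (Poly_Mapping.lookup m' r) * Poly_Mapping.lookup p m'"
  have "Poly_Mapping.lookup (pdiff r p) m = (\<Sum>m'\<in>Poly_Mapping.keys p. (?c m' when m' - ?s = m))"
    by (simp add: pdiff_def lookup_sum lookup_single when_def eq_commute)
  also have "\<dots> = (\<Sum>m'\<in>Poly_Mapping.keys p. (?c m' when m' = m + ?s))"
  proof (rule sum.cong[OF refl])
    fix m' show "(?c m' when m' - ?s = m) = (?c m' when m' = m + ?s)"
    proof (cases "Poly_Mapping.lookup m' r \<ge> 1")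
      case True then show ?thesis using sub_single_eq[OF True] by simp
    next
      case False
      then have "m' \<noteq> m + ?s" by (auto simp: lookup_add)
      moreover have "Poly_Mapping.lookup m' r = 0" using False by simp
      ultimately show ?thesis by (simp add: when_def)
    qed
  qed
  also have "\<dots> = ?c (m + ?s)"
    by (simp add: when_def sum.delta in_keys_iff)
  finally show ?thesis by (simp add: lookup_add)
qed

lemma pdiff_add: "pdiff r (p + q) = pdiff r p + pdiff r q"
  by (rule poly_mapping_eqI) (simp add: pdiff_lookup lookup_add algebra_simps)
lemma pdiff_uminus: "pdiff r (- p) = - pdiff r p"
  by (rule poly_mapping_eqI) (simp add: pdiff_lookup)
lemma pdiff_diff: "pdiff r (p - q) = pdiff r p - pdiff r q"
  by (rule poly_mapping_eqI) (simp add: pdiff_lookup lookup_minus algebra_simps)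
lemma pdiff_zero: "pdiff r 0 = 0"
  by (rule poly_mapping_eqI) (simp add: pdiff_lookup)
lemma pdiff_sum: "pdiff r (\<Sum>i\<in>A. f i) = (\<Sum>i\<in>A. pdiff r (f i))"
  by (induction A rule: infinite_finite_induct) (auto simp: pdiff_add pdiff_zero)

lemma pdiff_single:
  "pdiff r (Poly_Mapping.single a c) = Poly_Mapping.single (a - Poly_Mapping.single r 1) (of_nat (Poly_Mapping.lookup a r) * c)"
proof (rule poly_mapping_eqI)
  fix m
  show "Poly_Mapping.lookup (pdiff r (Poly_Mapping.single a c)) m = Poly_Mapping.lookup (Poly_Mapping.single (a - Poly_Mapping.single r 1) (of_nat (Poly_Mapping.lookup a r) * c)) m"
  proof (cases "a = m + Poly_Mapping.single r 1")
    case True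
    then have "a - Poly_Mapping.single r 1 = m" using sub_single_eq[where r=r and a=a and m=m] by (simp add: lookup_add)
    with True show ?thesis by (simp add: pdiff_lookup lookup_single lookup_add)
  next
    case False
    show ?thesis
    proof (cases "Poly_Mapping.lookup a r \<ge> 1")
      case True
      then show ?thesis using False sub_single_eq[OF True, of m]
        by (simp add: pdiff_lookup lookup_single when_def)
    next
      case F2: False
      have "Poly_Mapping.lookup a r = 0" using F2 by simp
      then show ?thesis using False by (simp add: pdiff_lookup lookup_single when_def)
    qed
  qed
qed



lemma pdiff_single_mult:
  fixes c d :: "'a::comm_ring_1"
  shows "pdiff r (Poly_Mapping.single a c * Poly_Mapping.single b d) =
    pdiff r (Poly_Mapping.single a c) * Poly_Mapping.single b d + Poly_Mapping.single a c * pdiff r (Poly_Mapping.single b d)"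
proof -
  let ?s = "Poly_Mapping.single r (1::nat)"
  have e1: "Poly_Mapping.single (a - ?s) (of_nat (Poly_Mapping.lookup a r) * c) * Poly_Mapping.single b d
      = Poly_Mapping.single (a + b - ?s) (of_nat (Poly_Mapping.lookup a r) * c * d)"
  proof (cases "Poly_Mapping.lookup a r \<ge> 1")
    case True
    have "a - ?s + b = a + b - ?s"
      using True by (auto simp: poly_mapping_eq_iff fun_eq_iff lookup_minus lookup_add lookup_single when_def)
    then show ?thesis by (simp add: mult_single)
  next
    case False then have "Poly_Mapping.lookup a r = 0" by simp
    then show ?thesis by simp
  qed
  have e2: "Poly_Mapping.single a c * Poly_Mapping.single (b - ?s) (of_nat (Poly_Mapping.lookup b r) * d)
      = Poly_Mapping.single (a + b - ?s) (of_nat (Poly_Mapping.lookup b r) * c * d)"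
  proof (cases "Poly_Mapping.lookup b r \<ge> 1")
    case True
    have "a + (b - ?s) = a + b - ?s"
      using True by (auto simp: poly_mapping_eq_iff fun_eq_iff lookup_minus lookup_add lookup_single when_def)
    then show ?thesis by (simp add: mult_single mult.assoc mult.left_commute)
  next
    case False then have "Poly_Mapping.lookup b r = 0" by simp
    then show ?thesis by simp
  qed
  have "pdiff r (Poly_Mapping.single a c) * Poly_Mapping.single b d + Poly_Mapping.single a c * pdiff r (Poly_Mapping.single b d)
     = Poly_Mapping.single (a + b - ?s) (of_nat (Poly_Mapping.lookup a r) * c * d) + Poly_Mapping.single (a + b - ?s) (of_nat (Poly_Mapping.lookup b r) * c * d)"
    by (simp only: pdiff_single e1 e2)
  also have "\<dots> = Poly_Mapping.single (a + b - ?s) (of_nat (Poly_Mapping.lookup (a + b) r) * (c * d))"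
    by (simp only: single_add[symmetric] lookup_add of_nat_add algebra_simps)
  finally show ?thesis by (simp only: mult_single pdiff_single)
qed

lemma pm_decomp: "p = (\<Sum>m\<in>Poly_Mapping.keys p. Poly_Mapping.single m (Poly_Mapping.lookup p m))"
  by (rule poly_mapping_eqI) (simp add: lookup_sum lookup_single when_def sum.delta in_keys_iff)

lemma pdiff_mult: "pdiff r (p * q) = pdiff r p * q + p * pdiff r (q :: 'a::comm_ring_1 dpoly)"
proof -
  let ?P = "\<lambda>m. Poly_Mapping.single m (Poly_Mapping.lookup p m)"
  let ?Q = "\<lambda>m. Poly_Mapping.single m (Poly_Mapping.lookup q m)"
  have p: "p = (\<Sum>a\<in>Poly_Mapping.keys p. ?P a)" and q: "q = (\<Sum>b\<in>Poly_Mapping.keys q. ?Q b)"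
    by (rule pm_decomp)+
  have "pdiff r (p * q) = pdiff r ((\<Sum>a\<in>Poly_Mapping.keys p. ?P a) * (\<Sum>b\<in>Poly_Mapping.keys q. ?Q b))"
    using p q by simp
  also have "\<dots> = (\<Sum>a\<in>Poly_Mapping.keys p. \<Sum>b\<in>Poly_Mapping.keys q. pdiff r (?P a) * ?Q b + ?P a * pdiff r (?Q b))"
    by (simp add: sum_product pdiff_sum pdiff_single_mult)
  also have "\<dots> = pdiff r (\<Sum>a\<in>Poly_Mapping.keys p. ?P a) * (\<Sum>b\<in>Poly_Mapping.keys q. ?Q b)
      + (\<Sum>a\<in>Poly_Mapping.keys p. ?P a) * pdiff r (\<Sum>b\<in>Poly_Mapping.keys q. ?Q b)"
    by (simp add: sum_product pdiff_sum sum.distrib)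
  finally show ?thesis using p q by simp
qed

lemma pdiff_const: "pdiff r (Poly_Mapping.single 0 c) = 0"
  by (simp add: pdiff_single)

lemma pdiff_one: "pdiff r (1::'a::comm_ring_1 dpoly) = 0"
  using pdiff_const[of r "1::'a"] by simp

lemma pdiff_dvar: "pdiff r (dvar k :: 'a::comm_ring_1 dpoly) = (if k = r then 1 else 0)"
  by (simp add: dvar_def pdiff_single lookup_single)

lemma pdiff_Cmat: "r \<in> {1..n} \<Longrightarrow> pdiff r (Cmat n C i j) = Poly_Mapping.single 0 (C i j r)"
  by (simp add: Cmat_def pdiff_sum pdiff_mult pdiff_const pdiff_dvar if_distrib cong: if_cong)



abbreviation cs :: "'a::comm_ring_1 \<Rightarrow> 'a dpoly" where "cs a \<equiv> Poly_Mapping.single 0 a"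

lemma cs_mult: "cs (a * b) = cs a * cs b" by (simp add: mult_single)
lemma cs_sum: "cs (\<Sum>i\<in>A. f i) = (\<Sum>i\<in>A. cs (f i))"
  by (induction A rule: infinite_finite_induct) (auto simp: single_add)

lemma lin1:
  "(\<Sum>r\<in>A. (\<Sum>k\<in>B. cs (f r k) * dvar k) * cs (g r)) = (\<Sum>k\<in>B. cs (\<Sum>r\<in>A. f r k * g r) * dvar k)"
proof -
  have "(\<Sum>r\<in>A. (\<Sum>k\<in>B. cs (f r k) * dvar k) * cs (g r)) = (\<Sum>r\<in>A. \<Sum>k\<in>B. cs (f r k * g r) * dvar k)"
    by (simp only: sum_distrib_right cs_mult) (simp add: mult_ac)
  also have "\<dots> = (\<Sum>k\<in>B. \<Sum>r\<in>A. cs (f r k * g r) * dvar k)" by (rule sum.swap)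
  also have "\<dots> = (\<Sum>k\<in>B. cs (\<Sum>r\<in>A. f r k * g r) * dvar k)" by (simp add: sum_distrib_right cs_sum)
  finally show ?thesis .
qed

lemma lin2:
  "(\<Sum>r\<in>A. cs (g r) * (\<Sum>k\<in>B. cs (f r k) * dvar k)) = (\<Sum>k\<in>B. cs (\<Sum>r\<in>A. g r * f r k) * dvar k)"
proof -
  have "(\<Sum>r\<in>A. cs (g r) * (\<Sum>k\<in>B. cs (f r k) * dvar k)) = (\<Sum>r\<in>A. \<Sum>k\<in>B. cs (g r * f r k) * dvar k)"
    by (simp add: sum_distrib_left cs_mult mult.assoc)
  also have "\<dots> = (\<Sum>k\<in>B. \<Sum>r\<in>A. cs (g r * f r k) * dvar k)" by (rule sum.swap)
  also have "\<dots> = (\<Sum>k\<in>B. cs (\<Sum>r\<in>A. g r * f r k) * dvar k)" by (simp add: sum_distrib_right cs_sum)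
  finally show ?thesis .
qed

lemma sum_eq_helper: "0 = (\<Sum>r\<in>A. - X r + Y r) \<Longrightarrow> sum X A = (sum Y A :: 'a::ab_group_add)"
proof -
  assume "0 = (\<Sum>r\<in>A. - X r + Y r)"
  then have "- sum X A + sum Y A = 0" by (simp only: sum.distrib sum_negf)
  then show ?thesis by (simp add: algebra_simps)
qed

definition Eop :: "nat \<Rightarrow> (nat \<Rightarrow> nat \<Rightarrow> nat \<Rightarrow> 'a::comm_ring_1) \<Rightarrow> nat \<Rightarrow> 'a dpoly \<Rightarrow> 'a dpoly" where
  "Eop n C v P = (\<Sum>r\<in>{1..n}. Cmat n C r v * pdiff r P)"

lemma Eop_add: "Eop n C v (P + Q) = Eop n C v P + Eop n C v Q"
  by (simp add: Eop_def pdiff_add distrib_left sum.distrib)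
lemma Eop_diff: "Eop n C v (P - Q) = Eop n C v P - Eop n C v Q"
  by (simp add: Eop_def pdiff_diff right_diff_distrib sum_subtractf)
lemma Eop_zero: "Eop n C v 0 = 0"
  by (simp add: Eop_def pdiff_zero)
lemma Eop_sum: "Eop n C v (\<Sum>i\<in>A. f i) = (\<Sum>i\<in>A. Eop n C v (f i))"
  by (induction A rule: infinite_finite_induct) (auto simp: Eop_add Eop_zero)
lemma Eop_mult: "Eop n C v (P * Q) = Eop n C v P * Q + P * Eop n C v Q"
  by (simp add: Eop_def pdiff_mult distrib_left sum.distrib sum_distrib_left sum_distrib_right mult_ac)
lemma Eop_one: "Eop n C v 1 = 0"
  by (simp add: Eop_def pdiff_one)

lemma grp_aux: "(a::'a::ab_group_add) + (b - d) - b - (a - f) = f - d" by (simp add: algebra_simps)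

lemma ring_aux: "(b::'a::comm_ring_1) = -a \<Longrightarrow> p*a - p*b = 2*(a*p)" by (simp add: mult_2 mult.commute)

context
  fixes n :: nat and C :: "nat \<Rightarrow> nat \<Rightarrow> nat \<Rightarrow> 'a::comm_ring_1"
  assumes antisym: "\<And>i j k. i \<in> {1..n} \<Longrightarrow> j \<in> {1..n} \<Longrightarrow> k \<in> {1..n} \<Longrightarrow> C i j k = - C i k j"
    and jacobi: "\<And>i j k l. i \<in> {1..n} \<Longrightarrow> j \<in> {1..n} \<Longrightarrow> k \<in> {1..n} \<Longrightarrow> l \<in> {1..n} \<Longrightarrow>
       (\<Sum>\<alpha>\<in>{1..n}. C \<alpha> i j * C l \<alpha> k + C \<alpha> j k * C l \<alpha> i + C \<alpha> k i * C l \<alpha> j) = 0"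
begin

lemma J1:
  assumes "\<mu> \<in> {1..n}" "\<nu> \<in> {1..n}" "\<sigma> \<in> {1..n}" "k \<in> {1..n}"
  shows "(\<Sum>r\<in>{1..n}. C r \<nu> k * C \<sigma> \<mu> r - C r \<mu> k * C \<sigma> \<nu> r) = (\<Sum>r\<in>{1..n}. C r \<mu> \<nu> * C \<sigma> r k)"
proof -
  have "0 = (\<Sum>r\<in>{1..n}. C r \<nu> k * C \<sigma> r \<mu> + C r k \<mu> * C \<sigma> r \<nu> + C r \<mu> \<nu> * C \<sigma> r k)"
    using jacobi[of \<nu> k \<mu> \<sigma>] assms by simp
  also have "\<dots> = (\<Sum>r\<in>{1..n}. - (C r \<nu> k * C \<sigma> \<mu> r - C r \<mu> k * C \<sigma> \<nu> r) + C r \<mu> \<nu> * C \<sigma> r k)"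
  proof (rule sum.cong[OF refl])
    fix r assume r: "r \<in> {1..n}"
    show "C r \<nu> k * C \<sigma> r \<mu> + C r k \<mu> * C \<sigma> r \<nu> + C r \<mu> \<nu> * C \<sigma> r k =
      - (C r \<nu> k * C \<sigma> \<mu> r - C r \<mu> k * C \<sigma> \<nu> r) + C r \<mu> \<nu> * C \<sigma> r k"
      using antisym[of \<sigma> r \<mu>] antisym[of r k \<mu>] antisym[of \<sigma> r \<nu>] r assms by (simp add: algebra_simps)
  qed
  finally show ?thesis by (rule sum_eq_helper)
qed

lemma J2:
  assumes "\<nu> \<in> {1..n}" "m \<in> {1..n}" "k \<in> {1..n}" "j \<in> {1..n}"
  shows "(\<Sum>r\<in>{1..n}. C r \<nu> m * C k j r) = (\<Sum>r\<in>{1..n}. C k \<nu> r * C r j m - C k r m * C r \<nu> j)"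
proof -
  have "0 = (\<Sum>r\<in>{1..n}. C r \<nu> m * C k r j + C r m j * C k r \<nu> + C r j \<nu> * C k r m)"
    using jacobi[of \<nu> m j k] assms by simp
  also have "\<dots> = (\<Sum>r\<in>{1..n}. - (C r \<nu> m * C k j r) + (C k \<nu> r * C r j m - C k r m * C r \<nu> j))"
  proof (rule sum.cong[OF refl])
    fix r assume r: "r \<in> {1..n}"
    show "C r \<nu> m * C k r j + C r m j * C k r \<nu> + C r j \<nu> * C k r m =
      - (C r \<nu> m * C k j r) + (C k \<nu> r * C r j m - C k r m * C r \<nu> j)"
      using antisym[of k r j] antisym[of r m j] antisym[of k r \<nu>] antisym[of r j \<nu>] r assms by (simp add: algebra_simps)
  qed
  finally show ?thesis by (rule sum_eq_helper)
qed


lemma P1: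
  assumes "\<mu> \<in> {1..n}" "\<nu> \<in> {1..n}" "\<sigma> \<in> {1..n}"
  shows "(\<Sum>r\<in>{1..n}. Cmat n C r \<nu> * cs (C \<sigma> \<mu> r) - Cmat n C r \<mu> * cs (C \<sigma> \<nu> r))
       = (\<Sum>t\<in>{1..n}. cs (C t \<mu> \<nu>) * Cmat n C \<sigma> t)"
proof -
  have "(\<Sum>r\<in>{1..n}. Cmat n C r \<nu> * cs (C \<sigma> \<mu> r) - Cmat n C r \<mu> * cs (C \<sigma> \<nu> r))
     = (\<Sum>r\<in>{1..n}. Cmat n C r \<nu> * cs (C \<sigma> \<mu> r)) - (\<Sum>r\<in>{1..n}. Cmat n C r \<mu> * cs (C \<sigma> \<nu> r))"
    by (rule sum_subtractf)
  also have "\<dots> = (\<Sum>k\<in>{1..n}. cs (\<Sum>r\<in>{1..n}. C r \<nu> k * C \<sigma> \<mu> r) * dvar k)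
                 - (\<Sum>k\<in>{1..n}. cs (\<Sum>r\<in>{1..n}. C r \<mu> k * C \<sigma> \<nu> r) * dvar k)"
    unfolding Cmat_def lin1 ..
  also have "\<dots> = (\<Sum>k\<in>{1..n}. cs (\<Sum>r\<in>{1..n}. C r \<nu> k * C \<sigma> \<mu> r - C r \<mu> k * C \<sigma> \<nu> r) * dvar k)"
    by (simp add: sum_subtractf single_diff left_diff_distrib)
  also have "\<dots> = (\<Sum>k\<in>{1..n}. cs (\<Sum>r\<in>{1..n}. C r \<mu> \<nu> * C \<sigma> r k) * dvar k)"
  proof (rule sum.cong[OF refl])
    fix m assume m: "m \<in> {1..n}"
    show "cs (\<Sum>r\<in>{1..n}. C r \<nu> m * C \<sigma> \<mu> r - C r \<mu> m * C \<sigma> \<nu> r) * dvar m = cs (\<Sum>r\<in>{1..n}. C r \<mu> \<nu> * C \<sigma> r m) * dvar m"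
      using J1[OF assms(1,2,3) m] by simp
  qed
  also have "\<dots> = (\<Sum>t\<in>{1..n}. cs (C t \<mu> \<nu>) * Cmat n C \<sigma> t)"
    unfolding Cmat_def lin2 ..
  finally show ?thesis .
qed

lemma K:
  assumes "\<nu> \<in> {1..n}" "k \<in> {1..n}" "j \<in> {1..n}"
  shows "Eop n C \<nu> (Cmat n C k j) = (\<Sum>r\<in>{1..n}. cs (C k \<nu> r) * Cmat n C r j - Cmat n C k r * cs (C r \<nu> j))"
proof -
  have "Eop n C \<nu> (Cmat n C k j) = (\<Sum>r\<in>{1..n}. Cmat n C r \<nu> * cs (C k j r))"
    unfolding Eop_def by (rule sum.cong[OF refl]) (simp add: pdiff_Cmat)
  also have "\<dots> = (\<Sum>m\<in>{1..n}. cs (\<Sum>r\<in>{1..n}. C r \<nu> m * C k j r) * dvar m)"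
    unfolding Cmat_def lin1 ..
  also have "\<dots> = (\<Sum>m\<in>{1..n}. cs (\<Sum>r\<in>{1..n}. C k \<nu> r * C r j m - C k r m * C r \<nu> j) * dvar m)"
  proof (rule sum.cong[OF refl])
    fix m assume m: "m \<in> {1..n}"
    show "cs (\<Sum>r\<in>{1..n}. C r \<nu> m * C k j r) * dvar m = cs (\<Sum>r\<in>{1..n}. C k \<nu> r * C r j m - C k r m * C r \<nu> j) * dvar m"
      using J2[OF assms(1) m assms(2,3)] by simp
  qed
  also have "\<dots> = (\<Sum>m\<in>{1..n}. cs (\<Sum>r\<in>{1..n}. C k \<nu> r * C r j m) * dvar m)
                 - (\<Sum>m\<in>{1..n}. cs (\<Sum>r\<in>{1..n}. C k r m * C r \<nu> j) * dvar m)"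
    by (simp add: sum_subtractf single_diff left_diff_distrib)
  also have "\<dots> = (\<Sum>r\<in>{1..n}. cs (C k \<nu> r) * Cmat n C r j) - (\<Sum>r\<in>{1..n}. Cmat n C k r * cs (C r \<nu> j))"
    unfolding Cmat_def lin1 lin2 ..
  also have "\<dots> = (\<Sum>r\<in>{1..n}. cs (C k \<nu> r) * Cmat n C r j - Cmat n C k r * cs (C r \<nu> j))"
    by (rule sum_subtractf[symmetric])
  finally show ?thesis .
qed


lemma IND:
  assumes "i \<in> {1..n}" "j \<in> {1..n}" "\<nu> \<in> {1..n}"
  shows "Eop n C \<nu> (Cpow n C L i j) = (\<Sum>r\<in>{1..n}. cs (C i \<nu> r) * Cpow n C L r j - Cpow n C L i r * cs (C r \<nu> j))"
  using assms(2)
proof (induction L arbitrary: j)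
  case 0
  have "(\<Sum>r\<in>{1..n}. cs (C i \<nu> r) * Cpow n C 0 r j - Cpow n C 0 i r * cs (C r \<nu> j))
      = (\<Sum>r\<in>{1..n}. cs (C i \<nu> r) * Cpow n C 0 r j) - (\<Sum>r\<in>{1..n}. Cpow n C 0 i r * cs (C r \<nu> j))"
    by (rule sum_subtractf)
  also have "\<dots> = 0"
  proof -
    have a: "\<And>(x::'a dpoly) P. x * (if P then 1 else 0) = (if P then x else 0)"
         "\<And>(x::'a dpoly) P. (if P then 1 else 0) * x = (if P then x else 0)" by simp_all
    show ?thesis using 0 assms(1) by (simp only: Cpow.simps a sum.delta sum.delta' finite_atLeastAtMost if_True) simp
  qed
  finally show ?case by (simp add: Eop_one Eop_zero)
next
  case (Suc L)
  let ?P = "Cpow n C L" and ?M = "Cmat n C"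
  have "Eop n C \<nu> (Cpow n C (Suc L) i j) = (\<Sum>k\<in>{1..n}. Eop n C \<nu> (?P i k) * ?M k j + ?P i k * Eop n C \<nu> (?M k j))"
    by (simp add: Eop_sum Eop_mult)
  also have "\<dots> = (\<Sum>k\<in>{1..n}. (\<Sum>r\<in>{1..n}. cs (C i \<nu> r) * ?P r k - ?P i r * cs (C r \<nu> k)) * ?M k j
        + ?P i k * (\<Sum>r\<in>{1..n}. cs (C k \<nu> r) * ?M r j - ?M k r * cs (C r \<nu> j)))"
  proof (rule sum.cong[OF refl])
    fix k assume k: "k \<in> {1..n}"
    show "Eop n C \<nu> (?P i k) * ?M k j + ?P i k * Eop n C \<nu> (?M k j) = (\<Sum>r\<in>{1..n}. cs (C i \<nu> r) * ?P r k - ?P i r * cs (C r \<nu> k)) * ?M k j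
        + ?P i k * (\<Sum>r\<in>{1..n}. cs (C k \<nu> r) * ?M r j - ?M k r * cs (C r \<nu> j))"
      using Suc.IH[OF k] K[OF assms(3) k Suc.prems] by simp
  qed
  also have "\<dots> = (\<Sum>k\<in>{1..n}. (\<Sum>r\<in>{1..n}. cs (C i \<nu> r) * ?P r k * ?M k j)
                 - (\<Sum>r\<in>{1..n}. ?P i r * cs (C r \<nu> k) * ?M k j)
                 + (\<Sum>r\<in>{1..n}. ?P i k * cs (C k \<nu> r) * ?M r j)
                 - (\<Sum>r\<in>{1..n}. ?P i k * ?M k r * cs (C r \<nu> j)))"
    by (rule sum.cong[OF refl]) (simp only: sum_subtractf sum_distrib_left sum_distrib_right left_diff_distrib right_diff_distrib mult.assoc add_diff_eq)
  also have "\<dots> = (\<Sum>k\<in>{1..n}. \<Sum>r\<in>{1..n}. cs (C i \<nu> r) * ?P r k * ?M k j)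
                 - (\<Sum>k\<in>{1..n}. \<Sum>r\<in>{1..n}. ?P i r * cs (C r \<nu> k) * ?M k j)
                 + (\<Sum>k\<in>{1..n}. \<Sum>r\<in>{1..n}. ?P i k * cs (C k \<nu> r) * ?M r j)
                 - (\<Sum>k\<in>{1..n}. \<Sum>r\<in>{1..n}. ?P i k * ?M k r * cs (C r \<nu> j))"
    by (simp only: sum.distrib sum_subtractf)
  also have "(\<Sum>k\<in>{1..n}. \<Sum>r\<in>{1..n}. ?P i k * cs (C k \<nu> r) * ?M r j)
      = (\<Sum>k\<in>{1..n}. \<Sum>r\<in>{1..n}. ?P i r * cs (C r \<nu> k) * ?M k j)"
    by (rule sum.swap)
  also have "(\<Sum>k\<in>{1..n}. \<Sum>r\<in>{1..n}. cs (C i \<nu> r) * ?P r k * ?M k j)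
      = (\<Sum>r\<in>{1..n}. cs (C i \<nu> r) * Cpow n C (Suc L) r j)"
    by (subst sum.swap) (simp add: sum_distrib_left mult.assoc)
  also have "(\<Sum>k\<in>{1..n}. \<Sum>r\<in>{1..n}. ?P i k * ?M k r * cs (C r \<nu> j))
      = (\<Sum>r\<in>{1..n}. Cpow n C (Suc L) i r * cs (C r \<nu> j))"
    by (subst sum.swap) (simp add: sum_distrib_right)
  finally show ?case by (simp add: sum_subtractf)
qed

lemma part1:
  assumes "\<mu> \<in> {1..n}" "\<nu> \<in> {1..n}" "\<gamma> \<in> {1..n}"
  shows "(\<Sum>\<rho>\<in>{1..n}. \<Sum>\<sigma>\<in>{1..n}.
            Cmat n C \<rho> \<nu> * Poly_Mapping.single 0 (C \<sigma> \<mu> \<rho>) * Cpow n C L \<gamma> \<sigma>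
          - Cmat n C \<rho> \<mu> * Poly_Mapping.single 0 (C \<sigma> \<nu> \<rho>) * Cpow n C L \<gamma> \<sigma>)
         = (\<Sum>\<sigma>\<in>{1..n}. Poly_Mapping.single 0 (C \<sigma> \<mu> \<nu>) * Cpow n C (Suc L) \<gamma> \<sigma>)"
proof -
  have "(\<Sum>\<rho>\<in>{1..n}. \<Sum>\<sigma>\<in>{1..n}.
            Cmat n C \<rho> \<nu> * cs (C \<sigma> \<mu> \<rho>) * Cpow n C L \<gamma> \<sigma>
          - Cmat n C \<rho> \<mu> * cs (C \<sigma> \<nu> \<rho>) * Cpow n C L \<gamma> \<sigma>)
      = (\<Sum>\<sigma>\<in>{1..n}. (\<Sum>\<rho>\<in>{1..n}. Cmat n C \<rho> \<nu> * cs (C \<sigma> \<mu> \<rho>) - Cmat n C \<rho> \<mu> * cs (C \<sigma> \<nu> \<rho>)) * Cpow n C L \<gamma> \<sigma>)"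
    by (subst sum.swap) (simp add: sum_distrib_right left_diff_distrib)
  also have "\<dots> = (\<Sum>\<sigma>\<in>{1..n}. (\<Sum>t\<in>{1..n}. cs (C t \<mu> \<nu>) * Cmat n C \<sigma> t) * Cpow n C L \<gamma> \<sigma>)"
  proof (rule sum.cong[OF refl])
    fix s assume s: "s \<in> {1..n}"
    show "(\<Sum>\<rho>\<in>{1..n}. Cmat n C \<rho> \<nu> * cs (C s \<mu> \<rho>) - Cmat n C \<rho> \<mu> * cs (C s \<nu> \<rho>)) * Cpow n C L \<gamma> s = (\<Sum>t\<in>{1..n}. cs (C t \<mu> \<nu>) * Cmat n C s t) * Cpow n C L \<gamma> s"
      using P1[OF assms(1,2) s] by simp
  qed
  also have "\<dots> = (\<Sum>\<sigma>\<in>{1..n}. \<Sum>t\<in>{1..n}. cs (C t \<mu> \<nu>) * Cmat n C \<sigma> t * Cpow n C L \<gamma> \<sigma>)"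
    by (simp only: sum_distrib_right)
  also have "\<dots> = (\<Sum>t\<in>{1..n}. \<Sum>\<sigma>\<in>{1..n}. cs (C t \<mu> \<nu>) * (Cpow n C L \<gamma> \<sigma> * Cmat n C \<sigma> t))"
    by (subst sum.swap) (simp only: mult_ac)
  also have "\<dots> = (\<Sum>t\<in>{1..n}. cs (C t \<mu> \<nu>) * Cpow n C (Suc L) \<gamma> t)"
    by (simp only: Cpow.simps sum_distrib_left)
  finally show ?thesis .
qed

lemma part2:
  assumes "\<mu> \<in> {1..n}" "\<nu> \<in> {1..n}" "\<gamma> \<in> {1..n}"
  shows "(\<Sum>\<rho>\<in>{1..n}. Poly_Mapping.single 0 (C \<gamma> \<mu> \<rho>) * Cpow n C L \<rho> \<nu>
            + Cmat n C \<rho> \<nu> * pdiff \<rho> (Cpow n C L \<gamma> \<mu>)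
            - Poly_Mapping.single 0 (C \<gamma> \<nu> \<rho>) * Cpow n C L \<rho> \<mu>
            - Cmat n C \<rho> \<mu> * pdiff \<rho> (Cpow n C L \<gamma> \<nu>))
         = 2 * (\<Sum>\<sigma>\<in>{1..n}. Poly_Mapping.single 0 (C \<sigma> \<mu> \<nu>) * Cpow n C L \<gamma> \<sigma>)"
proof -
  let ?P = "Cpow n C L"
  have "(\<Sum>\<rho>\<in>{1..n}. cs (C \<gamma> \<mu> \<rho>) * ?P \<rho> \<nu>
            + Cmat n C \<rho> \<nu> * pdiff \<rho> (?P \<gamma> \<mu>)
            - cs (C \<gamma> \<nu> \<rho>) * ?P \<rho> \<mu>
            - Cmat n C \<rho> \<mu> * pdiff \<rho> (?P \<gamma> \<nu>))
      = (\<Sum>\<rho>\<in>{1..n}. cs (C \<gamma> \<mu> \<rho>) * ?P \<rho> \<nu>) + Eop n C \<nu> (?P \<gamma> \<mu>)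
        - (\<Sum>\<rho>\<in>{1..n}. cs (C \<gamma> \<nu> \<rho>) * ?P \<rho> \<mu>) - Eop n C \<mu> (?P \<gamma> \<nu>)"
    by (simp add: Eop_def sum.distrib sum_subtractf)
  also have "\<dots> = (\<Sum>\<rho>\<in>{1..n}. ?P \<gamma> \<rho> * cs (C \<rho> \<mu> \<nu>)) - (\<Sum>\<rho>\<in>{1..n}. ?P \<gamma> \<rho> * cs (C \<rho> \<nu> \<mu>))"
    by (simp only: IND[OF assms(3) assms(1) assms(2)] IND[OF assms(3) assms(2) assms(1)] sum_subtractf) (rule grp_aux)
  also have "\<dots> = (\<Sum>\<rho>\<in>{1..n}. 2 * (cs (C \<rho> \<mu> \<nu>) * ?P \<gamma> \<rho>))"
    unfolding sum_subtractf[symmetric]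
  proof (rule sum.cong[OF refl])
    fix r assume r: "r \<in> {1..n}"
    show "?P \<gamma> r * cs (C r \<mu> \<nu>) - ?P \<gamma> r * cs (C r \<nu> \<mu>) = 2 * (cs (C r \<mu> \<nu>) * ?P \<gamma> r)"
    proof -
      have "cs (C r \<nu> \<mu>) = - cs (C r \<mu> \<nu>)" by (simp only: antisym[OF r assms(2,1)] single_uminus)
      then show ?thesis by (rule ring_aux)
    qed
  qed
  finally show ?thesis by (simp add: sum_distrib_left)
qed

end

theorem mainTheorem2:
  fixes n :: nat and C :: "nat \<Rightarrow> nat \<Rightarrow> nat \<Rightarrow> 'a::comm_ring_1"
  assumes antisym: "\<And>i j k. i \<in> {1..n} \<Longrightarrow> j \<in> {1..n} \<Longrightarrow> k \<in> {1..n} \<Longrightarrow> C i j k = - C i k j"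
    and jacobi: "\<And>i j k l. i \<in> {1..n} \<Longrightarrow> j \<in> {1..n} \<Longrightarrow> k \<in> {1..n} \<Longrightarrow> l \<in> {1..n} \<Longrightarrow>
       (\<Sum>\<alpha>\<in>{1..n}. C \<alpha> i j * C l \<alpha> k + C \<alpha> j k * C l \<alpha> i + C \<alpha> k i * C l \<alpha> j) = 0"
    and "\<mu> \<in> {1..n}" and "\<nu> \<in> {1..n}" and "\<gamma> \<in> {1..n}"
  shows "(\<Sum>\<rho>\<in>{1..n}. \<Sum>\<sigma>\<in>{1..n}.
            Cmat n C \<rho> \<nu> * Poly_Mapping.single 0 (C \<sigma> \<mu> \<rho>) * Cpow n C L \<gamma> \<sigma>
          - Cmat n C \<rho> \<mu> * Poly_Mapping.single 0 (C \<sigma> \<nu> \<rho>) * Cpow n C L \<gamma> \<sigma>)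
         = (\<Sum>\<sigma>\<in>{1..n}. Poly_Mapping.single 0 (C \<sigma> \<mu> \<nu>) * Cpow n C (Suc L) \<gamma> \<sigma>)
       \<and> (\<Sum>\<rho>\<in>{1..n}. Poly_Mapping.single 0 (C \<gamma> \<mu> \<rho>) * Cpow n C L \<rho> \<nu>
            + Cmat n C \<rho> \<nu> * pdiff \<rho> (Cpow n C L \<gamma> \<mu>)
            - Poly_Mapping.single 0 (C \<gamma> \<nu> \<rho>) * Cpow n C L \<rho> \<mu>
            - Cmat n C \<rho> \<mu> * pdiff \<rho> (Cpow n C L \<gamma> \<nu>))
         = 2 * (\<Sum>\<sigma>\<in>{1..n}. Poly_Mapping.single 0 (C \<sigma> \<mu> \<nu>) * Cpow n C L \<gamma> \<sigma>)"
  using part1[OF antisym jacobi assms(3-5)] part2[OF antisym jacobi assms(3-5)] by blast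

end
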